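(* There exists a constant $k_1$ such that for every integer $m\ge1$ there exists an acyclic directed multigraph $D'_m$ with exactly $m$ arcs such that $\mathrm{mac}(D'_m)\le\frac m4+k_1m^{3/4}$.
   Context: A directed multigraph may have parallel arcs (but no loops); it is acyclic if it contains no directed cycle. For a directed multigraph, $\mathrm{mac}(D)$ is the maximum, over all partitions $(X,Y)$ of the vertex set, of the number of arcs (counted with multiplicity) going from $X$ to $Y$. *)

theory Defs
  imports Complex_Main "HOL-Library.Multiset"
begin

definition dmultigraph :: "'a set \<Rightarrow> ('a \<times> 'a) multiset \<Rightarrow> bool" where
  "dmultigraph V A \<longleftrightarrow> finite V \<and> (\<forall>(u,v) \<in> set_mset A. u \<in> V \<and> v \<in> V \<and> u \<noteq> v)"

definition dm_acyclic :: "('a \<times> 'a) multiset \<Rightarrow> bool" where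
  "dm_acyclic A \<longleftrightarrow> acyclic (set_mset A)"

definition arcs_between :: "('a \<times> 'a) multiset \<Rightarrow> 'a set \<Rightarrow> 'a set \<Rightarrow> nat" where
  "arcs_between A X Y = size (filter_mset (\<lambda>(u,v). u \<in> X \<and> v \<in> Y) A)"

definition mac :: "'a set \<Rightarrow> ('a \<times> 'a) multiset \<Rightarrow> nat" where
  "mac V A = Max {arcs_between A X (V - X) | X. X \<subseteq> V}"

end

theory Submission
  imports Defs
begin

fun win :: "nat \<Rightarrow> nat \<Rightarrow> (nat \<times> nat) multiset" where
  "win k 0 = {#}"
| "win k (Suc l) = win k l + mset (map (\<lambda>p. (k+p, k+l)) [0..<l])"

lemma size_win: "2 * size (win k l) = l*(l-1)"
proof (induction l)
  case 0 then show ?case by simp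
next
  case (Suc l) then show ?case by (cases l) (auto simp: algebra_simps)
qed

lemma set_win: "(u,v) \<in># win k l \<Longrightarrow> k \<le> u \<and> u < v \<and> v < k+l"
  by (induction l) auto

definition cnt :: "(nat\<times>nat) multiset \<Rightarrow> nat set \<Rightarrow> nat" where
  "cnt A X = size (filter_mset (\<lambda>(u,v). u\<in>X \<and> v\<notin>X) A)"

lemma cnt_plus: "cnt (A+B) X = cnt A X + cnt B X" by (simp add: cnt_def)

lemma len_filter_upt: "int (length (filter P [0..<l])) = (\<Sum>p<l. if P p then 1 else 0)"
  by (induction l) auto

lemma cnt_new: "cnt (mset (map (\<lambda>p. (k+p, k+l)) [0..<l])) X =
   (if k+l \<in> X then 0 else length (filter (\<lambda>p. k+p\<in>X) [0..<l]))"
proof -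
  have g: "cnt (mset xs) X = length (filter (\<lambda>(u,v). u\<in>X \<and> v\<notin>X) xs)" for xs
    by (induction xs) (auto simp: cnt_def)
  show ?thesis unfolding g by (simp add: filter_map o_def)
qed

lemma sum_shift_aux: "(\<Sum>p<l. if P p then int (Suc l) - 1 - 2*int p else 0)
   = (\<Sum>p<l. if P p then int l - 1 - 2*int p else 0) + (\<Sum>p<l. if P p then 1 else 0)"
  by (subst sum.distrib[symmetric], rule sum.cong, auto)

lemma cnt_win: "2 * int (cnt (win k l) X) =
   (\<Sum>p<l. if k+p\<in>X then 1 else 0) * (int l - (\<Sum>p<l. if k+p\<in>X then 1 else 0))
   + (\<Sum>p<l. if k+p\<in>X then int l - 1 - 2*int p else 0)"
proof (induction l)
  case 0 then show ?case by (simp add: cnt_def)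
next
  case (Suc l)
  have e: "2 * int (cnt (win k (Suc l)) X) = 2 * int (cnt (win k l) X)
     + (if k+l\<in>X then 0 else 2 * (\<Sum>p<l. if k+p\<in>X then 1 else 0))"
    by (simp only: win.simps cnt_plus cnt_new) (simp add: len_filter_upt[where P="\<lambda>p. k+p\<in>X"])
  show ?case
    unfolding e Suc.IH sum.lessThan_Suc sum_shift_aux[where P="\<lambda>p. k+p\<in>X"]
    by (simp add: algebra_simps)
qed

definition H :: "nat set \<Rightarrow> nat \<Rightarrow> nat \<Rightarrow> int" where
  "H X L k = (\<Sum>p<L. if k+p\<in>X then (int p+1)*(int L - 1 - int p) else 0)"

lemma H_diff: "H X L k - H X L (Suc k) = (\<Sum>p<L. if k+p\<in>X then int L - 1 - 2*int p else 0)"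
proof -
  have a: "(\<Sum>q<Suc L. if k+q\<in>X then int q*(int L - int q) else 0) = H X L (Suc k)"
    by (subst sum.lessThan_Suc_shift) (auto simp: H_def algebra_simps intro!: sum.cong)
  have b: "(\<Sum>q<Suc L. if k+q\<in>X then int q*(int L - int q) else 0)
      = (\<Sum>q<L. if k+q\<in>X then int q*(int L - int q) else 0)" by simp
  have "H X L k - H X L (Suc k) = (\<Sum>p<L. (if k+p\<in>X then (int p+1)*(int L - 1 - int p) else 0)
       - (if k+p\<in>X then int p*(int L - int p) else 0))"
    unfolding a[symmetric] unfolding b unfolding H_def by (simp add: sum_subtractf)
  also have "\<dots> = (\<Sum>p<L. if k+p\<in>X then int L - 1 - 2*int p else 0)"
    by (intro sum.cong) (auto simp: algebra_simps)
  finally show ?thesis .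
qed

lemma H_nonneg: "0 \<le> H X L k"
  unfolding H_def by (intro sum_nonneg) auto

lemma H_le: "H X L k \<le> int L ^ 3"
proof -
  have "H X L k \<le> of_nat (card {..<L}) * (int L)^2"
    unfolding H_def
  proof (rule sum_bounded_above)
    fix p assume "p \<in> {..<L}"
    then have p: "p < L" by simp
    have "(int p+1)*(int L - 1 - int p) \<le> int L * int L"
      by (rule mult_mono) (use p in auto)
    then show "(if k+p\<in>X then (int p+1)*(int L - 1 - int p) else 0) \<le> (int L)^2"
      by (auto simp: power2_eq_square)
  qed
  then show ?thesis by (simp add: power3_eq_cube power2_eq_square)
qed

lemma win_bound: "8 * int (cnt (win k L) X) \<le> int L ^ 2 + 4 * (H X L k - H X L (Suc k))"
proof -
  define a where "a = (\<Sum>p<L. if k+p\<in>X then 1 else 0::int)"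
  have sq: "4 * (a * (int L - a)) \<le> int L ^ 2"
  proof -
    have "0 \<le> (int L - 2*a)^2" by simp
    then show ?thesis by (simp add: power2_eq_square algebra_simps)
  qed
  define P where "P = a * (int L - a)"
  define S where "S = (\<Sum>p<L. if k+p\<in>X then int L - 1 - 2*int p else 0)"
  have c: "2 * int (cnt (win k L) X) = P + S" using cnt_win[of k L X] unfolding P_def S_def a_def .
  have d: "H X L k - H X L (Suc k) = S" using H_diff[of X L k] unfolding S_def .
  have "4 * P \<le> int L ^ 2" using sq unfolding P_def .
  then show ?thesis using c d by (smt (verit))
qed

lemma sum_bound: "8 * int (cnt (\<Sum>k<N. win k L) X) \<le> int N * int L ^ 2 + 4 * (H X L 0 - H X L N)"
proof (induction N)
  case 0 then show ?case by (simp add: cnt_def)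
next
  case (Suc N)
  show ?case using Suc.IH win_bound[of N L X] by (simp add: cnt_plus algebra_simps)
qed

lemma arcs_le_cnt: "arcs_between A X (V-X) \<le> cnt A X"
  unfolding arcs_between_def cnt_def
  by (induction A) auto

lemma cnt_le_size: "cnt A X \<le> size A"
  unfolding cnt_def by (rule size_filter_mset_lesseq)


lemma final_arith:
  fixes m N L r T M :: nat and s :: real
  assumes s1: "1 \<le> s" and s4: "s^4 = real m" and L1: "s \<le> real L - 1" and L2: "real L \<le> s + 2"
    and T: "2*T = L*(L-1)" and mNT: "m = N*T + r" and rT: "r < T"
    and M: "8 * M \<le> N*L^2 + 4*L^3 + 8*r"
  shows "real M \<le> real m/4 + 30 * s^3"
proof -
  have L2': "2 \<le> L" using s1 L1 by linarith
  have Tr: "2 * real T = real L * (real L - 1)"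
  proof -
    have "real (2*T) = real (L*(L-1))" using T by simp
    then show ?thesis using L2' by (simp add: of_nat_diff)
  qed
  have Mr: "8 * real M \<le> real N * real L^2 + 4 * real L^3 + 8 * real r"
  proof -
    have "real (8*M) \<le> real (N*L^2 + 4*L^3 + 8*r)" using M by (simp only: of_nat_le_iff)
    then show ?thesis by simp
  qed
  have mr: "real m = real N * real T + real r" using mNT by simp
  have mr2: "2 * real m = real N * real L * (real L - 1) + 2 * real r"
  proof -
    have e: "2 * real m = real N * (2 * real T) + 2 * real r" using mr by (simp add: algebra_simps)
    show ?thesis unfolding e Tr by (simp add: algebra_simps)
  qed
  have h1: "real N * real L * (real L - 1) \<le> 2 * real m"
    using mr2 by simp
  have h2a: "real N * real L * s \<le> 2 * s^3 * s"
  proof -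
    have "real N * real L * s \<le> real N * real L * (real L - 1)"
      using L1 by (intro mult_left_mono) auto
    also have "\<dots> \<le> 2 * real m" by (rule h1)
    also have "\<dots> = 2 * s^3 * s" using s4 by (simp add: power_Suc[symmetric] algebra_simps)
    finally show ?thesis .
  qed
  have h2: "real N * real L \<le> 2 * s^3" using h2a s1 by simp
  have L3: "real L \<le> 3 * s" using L2 s1 by linarith
  have h3: "real L^3 \<le> 27 * s^3"
  proof -
    have "real L^3 \<le> (3*s)^3" by (rule power_mono[OF L3]) auto
    then show ?thesis by (simp add: power_mult_distrib)
  qed
  have h4a: "real L^2 \<le> 9 * s^2"
  proof -
    have "real L^2 \<le> (3*s)^2" by (rule power_mono[OF L3]) auto
    then show ?thesis by (simp add: power_mult_distrib)
  qed
  have s23: "s^2 \<le> s^3" using s1 by (simp add: power_increasing)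
  have h4: "2 * real r \<le> real L^2"
  proof -
    have "real r \<le> real T" using rT by simp
    then show ?thesis using Tr by (simp add: power2_eq_square algebra_simps)
  qed
  have idl: "real N * real L^2 = real N * real L * (real L - 1) + real N * real L"
    by (simp add: power2_eq_square algebra_simps)
  show ?thesis using Mr idl mr2 h2 h3 h4 h4a s23 by linarith
qed

lemma s_facts:
  fixes m :: nat assumes m: "1 \<le> m"
  defines "s \<equiv> real m powr (1/4)"
  shows "1 \<le> s" "s^4 = real m" "real m powr (3/4) = s^3"
    "s \<le> real (nat \<lceil>s\<rceil> + 1) - 1" "real (nat \<lceil>s\<rceil> + 1) \<le> s + 2"
proof -
  show s1: "1 \<le> s" unfolding s_def using m by (intro ge_one_powr_ge_zero) auto
  have mp: "0 < real m" using m by simp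
  show "s^4 = real m" unfolding s_def using mp
    by (simp add: powr_realpow[symmetric] powr_powr)
  show "real m powr (3/4) = s^3" unfolding s_def using mp
    by (simp add: powr_realpow[symmetric] powr_powr)
  have c: "0 \<le> \<lceil>s\<rceil>" using s1 by linarith
  have r: "real (nat \<lceil>s\<rceil> + 1) = of_int \<lceil>s\<rceil> + 1" using c by simp
  show "s \<le> real (nat \<lceil>s\<rceil> + 1) - 1" unfolding r by linarith
  show "real (nat \<lceil>s\<rceil> + 1) \<le> s + 2" unfolding r by linarith
qed

lemma in_win_sum: "(u,v) \<in># (\<Sum>k<N. win k L) \<Longrightarrow> \<exists>k<N. (u,v) \<in># win k L"
  by (induction N) (auto simp: less_Suc_eq)

lemma size_win_eq: "size (win k L) = size (win 0 L)"
  using size_win[of k L] size_win[of 0 L] by simp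

theorem mainTheorem10:
  shows "\<exists>k1::real. \<forall>m::nat. m \<ge> 1 \<longrightarrow>
           (\<exists>(V::nat set) (A::(nat \<times> nat) multiset).
              dmultigraph V A \<and> dm_acyclic A \<and> size A = m \<and>
              real (mac V A) \<le> real m / 4 + k1 * real m powr (3/4))"
proof (rule exI[where x=30], intro allI impI)
  fix m :: nat assume m: "1 \<le> m"
  define s where "s = real m powr (1/4)"
  note sf = s_facts[OF m, folded s_def]
  define L where "L = nat \<lceil>s\<rceil> + 1"
  have L1: "s \<le> real L - 1" and L2: "real L \<le> s + 2" using sf unfolding L_def by auto
  have L2': "2 \<le> L" using sf(1) L1 by linarith
  define T where "T = size (win 0 L)"
  have T2: "2*T = L*(L-1)" unfolding T_def by (rule size_win)
  have Tpos: "0 < T" using T2 L2' by (cases T) auto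
  define N where "N = m div T"
  define r where "r = m mod T"
  have mNT: "m = N*T + r" unfolding N_def r_def by simp
  have rT: "r < T" unfolding r_def using Tpos by simp
  define A where "A = (\<Sum>k<N. win k L) + replicate_mset r (0::nat,1::nat)"
  define V where "V = {..<N+L}"
  have arcs: "u < v \<and> v < N+L" if "(u,v) \<in># A" for u v
  proof -
    from that have "(u,v) \<in># (\<Sum>k<N. win k L) \<or> (u,v) = (0,1) \<and> 0 < r"
      unfolding A_def by (cases "r = 0") auto
    then show ?thesis
    proof
      assume "(u,v) \<in># (\<Sum>k<N. win k L)"
      then obtain k where "k < N" "(u,v) \<in># win k L" using in_win_sum by blast
      then show ?thesis using set_win[of u v k L] by auto
    qed (use L2' in auto)
  qed
  have dm: "dmultigraph V A"
    unfolding dmultigraph_def V_def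
  proof (intro conjI ballI)
    fix x assume "x \<in># A"
    moreover obtain u v where "x = (u,v)" by (cases x)
    ultimately show "case x of (u, v) \<Rightarrow> u \<in> {..<N + L} \<and> v \<in> {..<N + L} \<and> u \<noteq> v"
      using arcs[of u v] by auto
  qed simp
  have ac: "dm_acyclic A"
  proof -
    have "set_mset A \<subseteq> less_than" using arcs by auto
    then show ?thesis unfolding dm_acyclic_def
      by (rule acyclic_subset[OF wf_acyclic[OF wf_less_than]])
  qed
  have sz: "size A = m"
    proof -
    have "size (win k L) = T" for k using size_win_eq[of k L] unfolding T_def .
    then show ?thesis unfolding A_def mNT by (simp add: size_multiset_sum)
  qed
  have bnd: "8 * arcs_between A X (V-X) \<le> N*L^2 + 4*L^3 + 8*r" for X
  proof -
    have c1: "8 * int (cnt (\<Sum>k<N. win k L) X) \<le> int N * int L ^ 2 + 4 * int L ^ 3"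
      using sum_bound[where N=N and L=L and X=X] H_nonneg[of X L N] H_le[of X L 0] by (smt (verit))
    have c2: "cnt (replicate_mset r (0,1)) X \<le> r"
      using cnt_le_size[of "replicate_mset r (0,1)" X] by simp
    have "arcs_between A X (V-X) \<le> cnt A X" by (rule arcs_le_cnt)
    also have "\<dots> = cnt (\<Sum>k<N. win k L) X + cnt (replicate_mset r (0,1)) X"
      unfolding A_def cnt_plus ..
    finally have "int (8 * arcs_between A X (V-X)) \<le> int (N*L^2 + 4*L^3 + 8*r)"
      using c1 c2 by simp
    then show ?thesis by (simp only: of_nat_le_iff)
  qed
  define S where "S = {arcs_between A X (V - X) | X. X \<subseteq> V}"
  have Sim: "S = (\<lambda>X. arcs_between A X (V - X)) ` Pow V" unfolding S_def by auto
  have "finite S" "S \<noteq> {}" unfolding Sim V_def by blast+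
  then have "mac V A \<in> S" unfolding mac_def S_def[symmetric] by (rule Max_in)
  then have M: "8 * mac V A \<le> N*L^2 + 4*L^3 + 8*r" unfolding S_def using bnd by auto
  have "real (mac V A) \<le> real m/4 + 30 * s^3"
    by (rule final_arith[OF sf(1) sf(2) L1 L2 T2 mNT rT M])
  then have "real (mac V A) \<le> real m / 4 + 30 * real m powr (3/4)" using sf(3) by simp
  then show "\<exists>(V::nat set) (A::(nat \<times> nat) multiset).
              dmultigraph V A \<and> dm_acyclic A \<and> size A = m \<and>
              real (mac V A) \<le> real m / 4 + 30 * real m powr (3/4)"
    using dm ac sz by blast
qed

end
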